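(* Let $M/K$ be a finite extension of fields with $M$ not algebraically closed. If $M$ has a first-order model of $\mathbb{Z}$ in the language of rings augmented by finitely many parameters from $M$, then $K$ has a first-order model of $\mathbb{Z}$ in the language of rings augmented by finitely many parameters from $K$.
   Context: A first-order model of $\mathbb{Z}$ (with addition and multiplication) in a field $L$ in the language of rings with parameters is a bijection from $\mathbb{Z}$ onto a subset $D\subseteq L^d$ definable with those parameters, such that the images of the graphs of addition and multiplication are definable subsets of $D^3$. *)

theory Defs
  imports Main "HOL-Computational_Algebra.Polynomial"
begin

datatype 'a rterm =
    RVar nat
  | RConst 'a
  | RZero | ROne
  | RAdd "'a rterm" "'a rterm"
  | RMul "'a rterm" "'a rterm"
  | RNeg "'a rterm"

datatype 'a rform =
    FEq "'a rterm" "'a rterm"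
  | FNot "'a rform"
  | FAnd "'a rform" "'a rform"
  | FEx nat "'a rform"

fun tparams :: "'a rterm \<Rightarrow> 'a set" where
  "tparams (RVar i) = {}"
| "tparams (RConst c) = {c}"
| "tparams RZero = {}"
| "tparams ROne = {}"
| "tparams (RAdd s t) = tparams s \<union> tparams t"
| "tparams (RMul s t) = tparams s \<union> tparams t"
| "tparams (RNeg t) = tparams t"

fun fparams :: "'a rform \<Rightarrow> 'a set" where
  "fparams (FEq s t) = tparams s \<union> tparams t"
| "fparams (FNot p) = fparams p"
| "fparams (FAnd p q) = fparams p \<union> fparams q"
| "fparams (FEx i p) = fparams p"

fun teval :: "(nat \<Rightarrow> 'a::field) \<Rightarrow> 'a rterm \<Rightarrow> 'a" where
  "teval e (RVar i) = e i"
| "teval e (RConst c) = c"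
| "teval e RZero = 0"
| "teval e ROne = 1"
| "teval e (RAdd s t) = teval e s + teval e t"
| "teval e (RMul s t) = teval e s * teval e t"
| "teval e (RNeg t) = - teval e t"

text \<open>Satisfaction in the field with carrier S (a subfield of the ambient
  type 'a); quantifiers range over S.\<close>
fun sat :: "'a::field set \<Rightarrow> (nat \<Rightarrow> 'a) \<Rightarrow> 'a rform \<Rightarrow> bool" where
  "sat S e (FEq s t) = (teval e s = teval e t)"
| "sat S e (FNot p) = (\<not> sat S e p)"
| "sat S e (FAnd p q) = (sat S e p \<and> sat S e q)"
| "sat S e (FEx i p) = (\<exists>a\<in>S. sat S (e(i := a)) p)"

definition tuples :: "'a set \<Rightarrow> nat \<Rightarrow> 'a list set" where
  "tuples S d = {xs. length xs = d \<and> set xs \<subseteq> S}"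

definition definable :: "'a::field set \<Rightarrow> nat \<Rightarrow> 'a list set \<Rightarrow> bool" where
  "definable S d D \<longleftrightarrow> (\<exists>\<phi>. fparams \<phi> \<subseteq> S \<and>
     D = {xs \<in> tuples S d. sat S (\<lambda>i. if i < d then xs ! i else 0) \<phi>})"

definition has_model_of_Z :: "'a::field set \<Rightarrow> bool" where
  "has_model_of_Z S \<longleftrightarrow> (\<exists>d (f :: int \<Rightarrow> 'a list) D.
     D \<subseteq> tuples S d \<and> bij_betw f UNIV D \<and> definable S d D \<and>
     definable S (3 * d) {f a @ f b @ f (a + b) | a b. True} \<and>
     definable S (3 * d) {f a @ f b @ f (a * b) | a b. True})"

definition is_subfield :: "'a::field set \<Rightarrow> bool" where
  "is_subfield K \<longleftrightarrow> 0 \<in> K \<and> 1 \<in> K \<and> (\<forall>x\<in>K. \<forall>y\<in>K. x + y \<in> K \<and> x * y \<in> K)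
     \<and> (\<forall>x\<in>K. - x \<in> K \<and> inverse x \<in> K)"

text \<open>M (the whole type) is a finite-dimensional K-vector space.\<close>
definition finite_ext :: "'a::field set \<Rightarrow> bool" where
  "finite_ext K \<longleftrightarrow> (\<exists>B. finite B \<and> (\<forall>x::'a. \<exists>c. (\<forall>b\<in>B. c b \<in> K) \<and> x = (\<Sum>b\<in>B. c b * b)))"

definition alg_closed_field :: "'a::field itself \<Rightarrow> bool" where
  "alg_closed_field _ \<longleftrightarrow> (\<forall>p :: 'a poly. degree p \<ge> 1 \<longrightarrow> (\<exists>x. poly p x = 0))"

end

theory Submission
  imports Defs
begin

lemma sum_list_map_upt: "sum_list (map f [0..<n]) = (\<Sum>i<n. f i)"
  by (simp add: sum_list_distinct_conv_sum_set atLeast0LessThan)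

fun tsum :: "'a rterm list \<Rightarrow> 'a rterm" where
  "tsum [] = RZero"
| "tsum (t # ts) = RAdd t (tsum ts)"

lemma teval_tsum: "teval e (tsum ts) = sum_list (map (teval e) ts)"
  by (induction ts) auto

lemma tparams_tsum: "tparams (tsum ts) = (\<Union>t\<in>set ts. tparams t)"
  by (induction ts) auto

fun conj :: "'a rform list \<Rightarrow> 'a rform" where
  "conj [] = FEq RZero RZero"
| "conj (p # ps) = FAnd p (conj ps)"

lemma sat_conj: "sat S e (conj ps) = (\<forall>p\<in>set ps. sat S e p)"
  by (induction ps) auto

lemma fparams_conj: "fparams (conj ps) = (\<Union>p\<in>set ps. fparams p)"
  by (induction ps) auto

lemma fparams_exs: "fparams (foldr FEx vs p) = fparams p"
  by (induction vs) auto

lemma sat_exs: "sat S e (foldr FEx vs p) =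
   (\<exists>a. (\<forall>v\<in>set vs. a v \<in> S) \<and> sat S (\<lambda>j. if j \<in> set vs then a j else e j) p)"
proof (induction vs arbitrary: e)
  case Nil then show ?case by simp
next
  case (Cons v vs)
  show ?case
  proof
    assume "sat S e (foldr FEx (v # vs) p)"
    then obtain x a where x: "x \<in> S" and a: "\<forall>w\<in>set vs. a w \<in> S"
      and s: "sat S (\<lambda>j. if j \<in> set vs then a j else (e(v := x)) j) p"
      using Cons by auto
    define a' where "a' = (\<lambda>j. if j \<in> set vs then a j else x)"
    have "(\<lambda>j. if j \<in> set vs then a j else (e(v := x)) j) =
          (\<lambda>j. if j \<in> set (v # vs) then a' j else e j)"
      by (auto simp: a'_def)
    then show "\<exists>a. (\<forall>v\<in>set (v # vs). a v \<in> S) \<and> sat S (\<lambda>j. if j \<in> set (v # vs) then a j else e j) p"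
      using s x a by (intro exI[of _ a']) (auto simp: a'_def)
  next
    assume "\<exists>a. (\<forall>v\<in>set (v # vs). a v \<in> S) \<and> sat S (\<lambda>j. if j \<in> set (v # vs) then a j else e j) p"
    then obtain a where a: "\<forall>w\<in>set (v # vs). a w \<in> S"
      and s: "sat S (\<lambda>j. if j \<in> set (v # vs) then a j else e j) p" by blast
    have eq: "(\<lambda>j. if j \<in> set vs then a j else (e(v := a v)) j) =
          (\<lambda>j. if j \<in> set (v # vs) then a j else e j)"
      by auto
    have "sat S (e(v := a v)) (foldr FEx vs p)"
      unfolding Cons.IH
      apply (rule exI[of _ a]) using a s eq by simp
    then show "sat S e (foldr FEx (v # vs) p)" using a by auto
  qed
qed

locale kbasis =
  fixes K :: "'a::field set" and n :: nat and b :: "nat \<Rightarrow> 'a"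
  assumes sf: "is_subfield K"
  and span: "\<And>x. \<exists>c. (\<forall>k<n. c k \<in> K) \<and> x = (\<Sum>k<n. c k * b k)"
  and indep: "\<And>c. (\<forall>k<n. c k \<in> K) \<Longrightarrow> (\<Sum>k<n. c k * b k) = 0 \<Longrightarrow> \<forall>k<n. c k = 0"
begin

lemma K0: "0 \<in> K" and K1: "1 \<in> K"
  and Kadd: "x \<in> K \<Longrightarrow> y \<in> K \<Longrightarrow> x + y \<in> K"
  and Kmul: "x \<in> K \<Longrightarrow> y \<in> K \<Longrightarrow> x * y \<in> K"
  and Kneg: "x \<in> K \<Longrightarrow> - x \<in> K"
  using sf by (auto simp: is_subfield_def)

lemma Kdiff: "x \<in> K \<Longrightarrow> y \<in> K \<Longrightarrow> x - y \<in> K"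
  using Kadd Kneg by (metis diff_conv_add_uminus)

lemma Ksum: "(\<And>i. i \<in> A \<Longrightarrow> f i \<in> K) \<Longrightarrow> sum f A \<in> K"
proof (cases "finite A")
  case True
  assume "\<And>i. i \<in> A \<Longrightarrow> f i \<in> K"
  with True show ?thesis
    by (induction A rule: finite_induct) (auto intro: Kadd K0)
qed (simp add: K0)

definition coord :: "'a \<Rightarrow> nat \<Rightarrow> 'a" where
  "coord x k = (if k < n then (SOME c. (\<forall>k<n. c k \<in> K) \<and> x = (\<Sum>k<n. c k * b k)) k else 0)"

lemma coord_spec: "(\<forall>k<n. coord x k \<in> K) \<and> x = (\<Sum>k<n. coord x k * b k)"
proof -
  let ?c = "SOME c. (\<forall>k<n. c k \<in> K) \<and> x = (\<Sum>k<n. c k * b k)"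
  have c: "(\<forall>k<n. ?c k \<in> K) \<and> x = (\<Sum>k<n. ?c k * b k)"
    by (rule someI_ex[OF span])
  then show ?thesis by (auto simp: coord_def intro!: sum.cong)
qed

lemma coord_K: "coord x k \<in> K"
  using coord_spec[of x] by (cases "k < n") (auto simp: coord_def K0)

lemma coord_sum: "(\<Sum>k<n. coord x k * b k) = x"
  using coord_spec[of x] by simp

lemma uniq:
  assumes "\<forall>k<n. c k \<in> K" "\<forall>k<n. d k \<in> K" "(\<Sum>k<n. c k * b k) = (\<Sum>k<n. d k * b k)" "k < n"
  shows "c k = d k"
proof -
  have "(\<Sum>k<n. (c k - d k) * b k) = 0"
    using assms(3) by (simp add: left_diff_distrib sum_subtractf)
  then have "\<forall>k<n. c k - d k = 0"
    using assms(1,2) by (intro indep) (auto intro: Kdiff)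
  then show ?thesis using assms(4) by simp
qed

lemma coord_eq: "\<forall>k<n. c k \<in> K \<Longrightarrow> k < n \<Longrightarrow> coord (\<Sum>k<n. c k * b k) k = c k"
  using uniq[of "coord (\<Sum>k<n. c k * b k)" c k] coord_spec[of "\<Sum>k<n. c k * b k"] by auto

lemma n_pos: "0 < n"
proof (rule ccontr)
  assume "\<not> 0 < n"
  then have "n = 0" by simp
  then show False using coord_sum[of 1] by simp
qed

primrec T :: "'a rterm \<Rightarrow> nat \<Rightarrow> 'a rterm" where
  "T (RVar i) k = RVar (n * i + k)"
| "T (RConst c) k = RConst (coord c k)"
| "T RZero k = RZero"
| "T ROne k = RConst (coord 1 k)"
| "T (RAdd s t) k = RAdd (T s k) (T t k)"
| "T (RMul s t) k = tsum (map (\<lambda>i. tsum (map (\<lambda>j.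
      RMul (RConst (coord (b i * b j) k)) (RMul (T s i) (T t j))) [0..<n])) [0..<n])"
| "T (RNeg t) k = RNeg (T t k)"

definition dec :: "(nat \<Rightarrow> 'a) \<Rightarrow> nat \<Rightarrow> 'a" where
  "dec e i = (\<Sum>k<n. e (n * i + k) * b k)"

lemma teval_T: "teval (dec e) t = (\<Sum>k<n. teval e (T t k) * b k)"
proof (induction t)
  case (RVar i) then show ?case by (simp add: dec_def)
next
  case (RConst c) then show ?case by (simp add: coord_sum)
next
  case RZero then show ?case by simp
next
  case ROne then show ?case by (simp add: coord_sum)
next
  case (RAdd s t) then show ?case by (simp add: distrib_right sum.distrib)
next
  case (RNeg t) then show ?case by (simp add: sum_negf)
next
  case (RMul s t)
  define S where "S i = teval e (T s i)" for i
  define U where "U j = teval e (T t j)" for j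
  have "(\<Sum>k<n. teval e (T (RMul s t) k) * b k) =
     (\<Sum>k<n. (\<Sum>i<n. \<Sum>j<n. coord (b i * b j) k * (S i * U j)) * b k)"
    by (simp add: teval_tsum sum_list_map_upt S_def U_def o_def)
  also have "\<dots> = (\<Sum>k<n. \<Sum>i<n. \<Sum>j<n. coord (b i * b j) k * (S i * U j) * b k)"
    by (simp add: sum_distrib_right)
  also have "\<dots> = (\<Sum>i<n. \<Sum>k<n. \<Sum>j<n. coord (b i * b j) k * (S i * U j) * b k)"
    by (rule sum.swap)
  also have "\<dots> = (\<Sum>i<n. \<Sum>j<n. \<Sum>k<n. coord (b i * b j) k * (S i * U j) * b k)"
    by (rule sum.cong[OF refl], rule sum.swap)
  also have "\<dots> = (\<Sum>i<n. \<Sum>j<n. S i * U j * (\<Sum>k<n. coord (b i * b j) k * b k))"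
    by (simp add: sum_distrib_left mult.assoc mult.left_commute)
  also have "\<dots> = (\<Sum>i<n. \<Sum>j<n. S i * U j * (b i * b j))"
    by (simp only: coord_sum)
  also have "\<dots> = (\<Sum>i<n. \<Sum>j<n. (S i * b i) * (U j * b j))"
    by (simp add: mult_ac)
  also have "\<dots> = (\<Sum>i<n. S i * b i) * (\<Sum>j<n. U j * b j)"
    by (simp add: sum_product)
  also have "\<dots> = teval (dec e) (RMul s t)"
    using RMul by (simp add: S_def U_def)
  finally show ?case by simp
qed

lemma teval_K: "\<forall>j. e j \<in> K \<Longrightarrow> tparams t \<subseteq> K \<Longrightarrow> teval e t \<in> K"
  by (induction t) (auto intro: Kadd Kmul Kneg K0 K1)

lemma tparams_T: "tparams (T t k) \<subseteq> K"
  by (induction t arbitrary: k) (auto simp: tparams_tsum coord_K)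

primrec F :: "'a rform \<Rightarrow> 'a rform" where
  "F (FEq s t) = conj (map (\<lambda>k. FEq (T s k) (T t k)) [0..<n])"
| "F (FNot p) = FNot (F p)"
| "F (FAnd p q) = FAnd (F p) (F q)"
| "F (FEx i p) = foldr FEx (map (\<lambda>k. n * i + k) [0..<n]) (F p)"

lemma fparams_F: "fparams (F p) \<subseteq> K"
  by (induction p) (auto simp: fparams_conj fparams_exs dest: tparams_T[THEN subsetD])

lemma block: "k < n \<Longrightarrow> k' < n \<Longrightarrow> n * j + k = n * i + k' \<Longrightarrow> j = i"
proof -
  assume a: "k < n" "k' < n" "n * j + k = n * i + k'"
  have "(n * j + k) div n = j" using a(1) by simp
  moreover have "(n * i + k') div n = i" using a(2) by simp
  ultimately show "j = i" using a(3) by simp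
qed

lemma dec_override:
  "dec (\<lambda>j. if j \<in> set (map (\<lambda>k. n * i + k) [0..<n]) then a j else e j) =
   (dec e)(i := (\<Sum>k<n. a (n * i + k) * b k))"
proof
  fix j
  show "dec (\<lambda>j. if j \<in> set (map (\<lambda>k. n * i + k) [0..<n]) then a j else e j) j =
   ((dec e)(i := (\<Sum>k<n. a (n * i + k) * b k))) j"
  proof (cases "j = i")
    case True then show ?thesis by (auto simp: dec_def intro!: sum.cong)
  next
    case False
    have nm: "n * j + k \<notin> set (map (\<lambda>k. n * i + k) [0..<n])" if "k < n" for k
    proof
      assume "n * j + k \<in> set (map (\<lambda>k. n * i + k) [0..<n])"
      then have "n * i \<le> n * j + k \<and> n * j + k < n * i + n" by auto
      then show False using block[of k "n * j + k - n * i" j i] that False by auto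
    qed
    have "dec (\<lambda>j. if j \<in> set (map (\<lambda>k. n * i + k) [0..<n]) then a j else e j) j = dec e j"
      unfolding dec_def by (rule sum.cong[OF refl]) (simp only: if_not_P[OF nm] lessThan_iff)
    then show ?thesis using False by simp
  qed
qed

lemma sat_F: "\<forall>j. e j \<in> K \<Longrightarrow> sat K e (F p) = sat UNIV (dec e) p"
proof (induction p arbitrary: e)
  case (FEq s t)
  have "sat K e (F (FEq s t)) = (\<forall>k<n. teval e (T s k) = teval e (T t k))"
    by (auto simp: sat_conj)
  also have "\<dots> = ((\<Sum>k<n. teval e (T s k) * b k) = (\<Sum>k<n. teval e (T t k) * b k))"
  proof
    assume "\<forall>k<n. teval e (T s k) = teval e (T t k)"
    then show "(\<Sum>k<n. teval e (T s k) * b k) = (\<Sum>k<n. teval e (T t k) * b k)"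
      by (auto intro!: sum.cong)
  next
    assume "(\<Sum>k<n. teval e (T s k) * b k) = (\<Sum>k<n. teval e (T t k) * b k)"
    moreover have "\<forall>k<n. teval e (T s k) \<in> K" "\<forall>k<n. teval e (T t k) \<in> K"
      using FEq.prems teval_K tparams_T by blast+
    ultimately show "\<forall>k<n. teval e (T s k) = teval e (T t k)"
      using uniq[of "\<lambda>k. teval e (T s k)" "\<lambda>k. teval e (T t k)"] by blast
  qed
  also have "\<dots> = sat UNIV (dec e) (FEq s t)" by (simp add: teval_T)
  finally show ?case .
next
  case (FNot p) then show ?case by simp
next
  case (FAnd p q) then show ?case by simp
next
  case (FEx i p)
  let ?vs = "map (\<lambda>k. n * i + k) [0..<n]"
  have "sat K e (F (FEx i p)) = (\<exists>a. (\<forall>v\<in>set ?vs. a v \<in> K) \<and>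
      sat K (\<lambda>j. if j \<in> set ?vs then a j else e j) (F p))"
    by (simp add: sat_exs)
  also have "\<dots> = (\<exists>a. (\<forall>v\<in>set ?vs. a v \<in> K) \<and>
      sat UNIV ((dec e)(i := (\<Sum>k<n. a (n * i + k) * b k))) p)"
  proof -
    have "sat K (\<lambda>j. if j \<in> set ?vs then a j else e j) (F p) =
      sat UNIV ((dec e)(i := (\<Sum>k<n. a (n * i + k) * b k))) p"
      if "\<forall>v\<in>set ?vs. a v \<in> K" for a
    proof -
      have pr: "\<forall>j. (if j \<in> set ?vs then a j else e j) \<in> K" using FEx.prems that by auto
      show ?thesis
        using FEx.IH[of "\<lambda>j. if j \<in> set ?vs then a j else e j", OF pr] by (simp only: dec_override)
    qed
    then show ?thesis by blast
  qed
  also have "\<dots> = (\<exists>x. sat UNIV ((dec e)(i := x)) p)"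
  proof
    assume "\<exists>x. sat UNIV ((dec e)(i := x)) p"
    then obtain x where x: "sat UNIV ((dec e)(i := x)) p" by blast
    define a where "a j = coord x (j - n * i)" for j
    have "(\<Sum>k<n. a (n * i + k) * b k) = x"
      by (simp add: a_def coord_sum)
    then show "\<exists>a. (\<forall>v\<in>set ?vs. a v \<in> K) \<and>
      sat UNIV ((dec e)(i := (\<Sum>k<n. a (n * i + k) * b k))) p"
      using x by (intro exI[of _ a]) (auto simp: a_def coord_K)
  qed blast
  also have "\<dots> = sat UNIV (dec e) (FEx i p)" by simp
  finally show ?case .
qed



definition enc :: "'a list \<Rightarrow> 'a list" where
  "enc xs = map (\<lambda>j. coord (xs ! (j div n)) (j mod n)) [0..<n * length xs]"

definition decl :: "'a list \<Rightarrow> 'a list" where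
  "decl ys = map (\<lambda>i. \<Sum>k<n. ys ! (n * i + k) * b k) [0..<length ys div n]"

lemma length_enc[simp]: "length (enc xs) = n * length xs"
  by (simp add: enc_def)

lemma enc_nth: "j < n * length xs \<Longrightarrow> enc xs ! j = coord (xs ! (j div n)) (j mod n)"
  by (simp add: enc_def)

lemma blk_lt: "i < d \<Longrightarrow> k < n \<Longrightarrow> n * i + k < n * d"
proof -
  assume "i < d" "k < n"
  then have "n * i + k < n * i + n" by simp
  also have "\<dots> = n * (i + 1)" by simp
  also have "\<dots> \<le> n * d" using \<open>i < d\<close> by (intro mult_le_mono2) simp
  finally show ?thesis .
qed

lemma blk_div: "k < n \<Longrightarrow> (n * i + k) div n = i" by simp
lemma blk_mod: "k < n \<Longrightarrow> (n * i + k) mod n = k" by simp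

lemma decl_enc: "decl (enc xs) = xs"
proof (rule nth_equalityI)
  show "length (decl (enc xs)) = length xs" using n_pos by (simp add: decl_def)
  fix i assume "i < length (decl (enc xs))"
  then have i: "i < length xs" using n_pos by (simp add: decl_def)
  have "decl (enc xs) ! i = (\<Sum>k<n. enc xs ! (n * i + k) * b k)"
    using i n_pos by (simp add: decl_def)
  also have "\<dots> = (\<Sum>k<n. coord (xs ! i) k * b k)"
    using i by (intro sum.cong refl) (simp add: enc_nth blk_lt)
  also have "\<dots> = xs ! i" by (rule coord_sum)
  finally show "decl (enc xs) ! i = xs ! i" .
qed

lemma inj_enc: "inj enc"
  by (metis decl_enc injI)

lemma enc_append: "enc (xs @ ys) = enc xs @ enc ys"
proof (rule nth_equalityI)
  show "length (enc (xs @ ys)) = length (enc xs @ enc ys)" by (simp add: algebra_simps)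
  fix j assume "j < length (enc (xs @ ys))"
  then have j: "j < n * length xs + n * length ys" by (simp add: algebra_simps)
  show "enc (xs @ ys) ! j = (enc xs @ enc ys) ! j"
  proof (cases "j < n * length xs")
    case True
    then have "j div n < length xs"
      using n_pos by (simp add: div_less_iff_less_mult mult.commute)
    then show ?thesis using True j by (simp add: enc_nth nth_append algebra_simps)
  next
    case False
    then obtain j' where jj: "j = n * length xs + j'" by (metis le_Suc_ex not_le_imp_less less_imp_le_nat)
    then have j': "j' < n * length ys" using j by simp
    have d: "j div n = length xs + j' div n" using n_pos jj by simp
    have m: "j mod n = j' mod n" using jj by simp
    show ?thesis using False j j' jj d m n_pos
      by (simp add: enc_nth nth_append algebra_simps)
  qed
qed

lemma enc_tuples: "enc xs \<in> tuples K (n * length xs)"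
  by (auto simp: tuples_def enc_def coord_K)

lemma enc_decl:
  assumes "ys \<in> tuples K (n * d)"
  shows "enc (decl ys) = ys" "length (decl ys) = d"
proof -
  have ys: "length ys = n * d" "set ys \<subseteq> K" using assms by (auto simp: tuples_def)
  show ld: "length (decl ys) = d" using ys n_pos by (simp add: decl_def)
  show "enc (decl ys) = ys"
  proof (rule nth_equalityI)
    show "length (enc (decl ys)) = length ys" using ld ys by simp
    fix j assume "j < length (enc (decl ys))"
    then have j: "j < n * d" using ld by simp
    have jd: "j div n < d" using j n_pos by (simp add: div_less_iff_less_mult mult.commute)
    have jm: "j mod n < n" using n_pos by simp
    have inK: "\<forall>k<n. ys ! (n * (j div n) + k) \<in> K"
      using ys jd by (auto intro!: subsetD[OF ys(2)] nth_mem simp: blk_lt)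
    have "enc (decl ys) ! j = coord (decl ys ! (j div n)) (j mod n)"
      using j ld by (simp add: enc_nth)
    also have "\<dots> = coord (\<Sum>k<n. ys ! (n * (j div n) + k) * b k) (j mod n)"
      using jd ys n_pos by (simp add: decl_def)
    also have "\<dots> = ys ! (n * (j div n) + j mod n)"
      using coord_eq[of "\<lambda>k. ys ! (n * (j div n) + k)", OF inK jm] .
    also have "\<dots> = ys ! j" by simp
    finally show "enc (decl ys) ! j = ys ! j" .
  qed
qed

lemma dec_env:
  assumes "length xs = d"
  shows "dec (\<lambda>i. if i < n * d then enc xs ! i else 0) = (\<lambda>i. if i < d then xs ! i else 0)"
proof
  fix i
  show "dec (\<lambda>i. if i < n * d then enc xs ! i else 0) i = (if i < d then xs ! i else 0)"
  proof (cases "i < d")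
    case True
    have "dec (\<lambda>i. if i < n * d then enc xs ! i else 0) i = (\<Sum>k<n. coord (xs ! i) k * b k)"
      unfolding dec_def using True assms by (intro sum.cong refl) (simp add: blk_lt enc_nth)
    then show ?thesis using True coord_sum by simp
  next
    case False
    have "\<not> n * i + k < n * d" for k
    proof -
      have "n * d \<le> n * i" using False by (intro mult_le_mono2) simp
      then show ?thesis by linarith
    qed
    then show ?thesis using False by (simp add: dec_def)
  qed
qed

lemma definable_enc:
  assumes "definable UNIV d D"
  shows "definable K (n * d) (enc ` D)"
proof -
  obtain \<phi> where D: "D = {xs \<in> tuples UNIV d. sat UNIV (\<lambda>i. if i < d then xs ! i else 0) \<phi>}"
    using assms by (auto simp: definable_def)
  have envK: "\<forall>j. (if j < n * d then ys ! j else 0) \<in> K" if "ys \<in> tuples K (n * d)" for ys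
    using that K0 by (auto simp: tuples_def intro!: subsetD[of "set ys" K] nth_mem)
  have "enc ` D = {ys \<in> tuples K (n * d). sat K (\<lambda>i. if i < n * d then ys ! i else 0) (F \<phi>)}"
  proof (intro set_eqI iffI)
    fix ys assume "ys \<in> enc ` D"
    then obtain xs where xs: "xs \<in> D" "ys = enc xs" by blast
    then have l: "length xs = d" using D by (auto simp: tuples_def)
    have t0: "enc xs \<in> tuples K (n * d)" using enc_tuples[of xs] l by simp
    then have t: "ys \<in> tuples K (n * d)" using xs by simp
    have "sat K (\<lambda>i. if i < n * d then enc xs ! i else 0) (F \<phi>)"
      using sat_F[OF envK[OF t0]] dec_env[OF l] xs(1) D by simp
    then have "sat K (\<lambda>i. if i < n * d then ys ! i else 0) (F \<phi>)" unfolding xs(2) .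
    then show "ys \<in> {ys \<in> tuples K (n * d). sat K (\<lambda>i. if i < n * d then ys ! i else 0) (F \<phi>)}"
      using t by simp
  next
    fix ys assume "ys \<in> {ys \<in> tuples K (n * d). sat K (\<lambda>i. if i < n * d then ys ! i else 0) (F \<phi>)}"
    then have t: "ys \<in> tuples K (n * d)" and s: "sat K (\<lambda>i. if i < n * d then ys ! i else 0) (F \<phi>)"
      by auto
    let ?xs = "decl ys"
    have e: "enc ?xs = ys" and l: "length ?xs = d" using enc_decl[OF t] by auto
    have "sat UNIV (\<lambda>i. if i < d then ?xs ! i else 0) \<phi>"
    proof -
      have de: "dec (\<lambda>i. if i < n * d then ys ! i else 0) = (\<lambda>i. if i < d then ?xs ! i else 0)"
        using dec_env[OF l] unfolding e .
      show ?thesis using s sat_F[OF envK[OF t]] unfolding de by simp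
    qed
    then have "?xs \<in> D" using D l by (simp add: tuples_def)
    then show "ys \<in> enc ` D" using e by force
  qed
  then show ?thesis using fparams_F unfolding definable_def by blast
qed

end

lemma subfield_sum: "is_subfield K \<Longrightarrow> (\<And>i. i \<in> A \<Longrightarrow> f i \<in> K) \<Longrightarrow> sum f A \<in> K"
proof (cases "finite A")
  case True
  assume sf: "is_subfield K" and "\<And>i. i \<in> A \<Longrightarrow> f i \<in> K"
  with True show ?thesis
    by (induction A rule: finite_induct) (auto simp: is_subfield_def)
qed (simp add: is_subfield_def)

lemma basis_exists:
  fixes K :: "'a::field set"
  assumes sf: "is_subfield K" and fe: "finite_ext K"
  shows "\<exists>n b. kbasis K n b"
proof -
  define spans where "spans B \<longleftrightarrow> (\<forall>x::'a. \<exists>c. (\<forall>b\<in>B. c b \<in> K) \<and> x = (\<Sum>b\<in>B. c b * b))" for B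
  have ex: "\<exists>m B. finite B \<and> spans B \<and> card B = m"
    using fe unfolding finite_ext_def spans_def by blast
  define m where "m = (LEAST m. \<exists>B. finite B \<and> spans B \<and> card B = m)"
  obtain B where B: "finite B" "spans B" "card B = m"
    using LeastI_ex[OF ex] unfolding m_def by blast
  have minim: "m \<le> card B'" if "finite B'" "spans B'" for B'
    unfolding m_def using that by (intro Least_le) blast
  have K: "0 \<in> K" "1 \<in> K" "\<And>x y. x \<in> K \<Longrightarrow> y \<in> K \<Longrightarrow> x + y \<in> K"
    "\<And>x y. x \<in> K \<Longrightarrow> y \<in> K \<Longrightarrow> x * y \<in> K" "\<And>x. x \<in> K \<Longrightarrow> - x \<in> K"
    "\<And>x. x \<in> K \<Longrightarrow> inverse x \<in> K"
    using sf by (auto simp: is_subfield_def)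
  have indepB: "\<forall>y\<in>B. c y = 0" if c: "\<forall>y\<in>B. c y \<in> K" "(\<Sum>y\<in>B. c y * y) = 0" for c
  proof (rule ccontr)
    assume "\<not> (\<forall>y\<in>B. c y = 0)"
    then obtain b0 where b0: "b0 \<in> B" "c b0 \<noteq> 0" by blast
    let ?B' = "B - {b0}"
    have rel: "c b0 * b0 + (\<Sum>y\<in>?B'. c y * y) = 0"
      using c(2) sum.remove[OF B(1) b0(1), of "\<lambda>y. c y * y"] by simp
    have b0eq: "b0 = (\<Sum>y\<in>?B'. (- (c y * inverse (c b0))) * y)"
    proof -
      have "c b0 * b0 = - (\<Sum>y\<in>?B'. c y * y)" using rel by (simp add: eq_neg_iff_add_eq_0)
      then have "b0 = inverse (c b0) * (- (\<Sum>y\<in>?B'. c y * y))"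
        using b0(2) by (metis field_class.field_inverse mult.assoc mult.commute mult_1)
      also have "\<dots> = (\<Sum>y\<in>?B'. (- (c y * inverse (c b0))) * y)"
        by (simp add: sum_distrib_left sum_negf[symmetric] mult_ac)
      finally show ?thesis .
    qed
    have "spans ?B'"
      unfolding spans_def
    proof
      fix x :: 'a
      obtain d where d: "\<forall>y\<in>B. d y \<in> K" "x = (\<Sum>y\<in>B. d y * y)"
        using B(2) unfolding spans_def by blast
      have "x = d b0 * b0 + (\<Sum>y\<in>?B'. d y * y)"
        using d(2) sum.remove[OF B(1) b0(1), of "\<lambda>y. d y * y"] by simp
      also have "\<dots> = d b0 * (\<Sum>y\<in>?B'. (- (c y * inverse (c b0))) * y) + (\<Sum>y\<in>?B'. d y * y)"
        using arg_cong[OF b0eq, of "\<lambda>z. d b0 * z"] by simp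
      also have "\<dots> = (\<Sum>y\<in>?B'. d b0 * ((- (c y * inverse (c b0))) * y) + d y * y)"
        by (simp only: sum_distrib_left sum.distrib[symmetric])
      also have "\<dots> = (\<Sum>y\<in>?B'. (d y + d b0 * (- (c y * inverse (c b0)))) * y)"
        by (intro sum.cong refl) (simp add: algebra_simps)
      finally have "x = (\<Sum>y\<in>?B'. (d y + d b0 * (- (c y * inverse (c b0)))) * y)" .
      moreover have "\<forall>y\<in>?B'. d y + d b0 * (- (c y * inverse (c b0))) \<in> K"
        using d(1) c(1) b0(1) K(3-6) by (simp del: mult_minus_right)
      ultimately show "\<exists>c. (\<forall>b\<in>?B'. c b \<in> K) \<and> x = (\<Sum>b\<in>?B'. c b * b)"
        by (intro exI[of _ "\<lambda>y. d y + d b0 * (- (c y * inverse (c b0)))"]) simp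
    qed
    then have "m \<le> card ?B'" using minim B(1) by simp
    moreover have "card ?B' < card B" using B(1) b0(1) by (meson card_Diff1_less)
    ultimately show False using B(3) by simp
  qed
  obtain h where h: "bij_betw h {..<card B} B"
    using ex_bij_betw_nat_finite[OF B(1)] by (auto simp: lessThan_atLeast0)
  let ?n = "card B"
  have reidx: "(\<Sum>k<?n. g (h k)) = (\<Sum>y\<in>B. g y)" for g :: "'a \<Rightarrow> 'a"
    using sum.reindex_bij_betw[OF h] .
  have "kbasis K ?n h"
  proof
    show "is_subfield K" by (rule sf)
  next
    fix x :: 'a
    obtain c where c: "\<forall>y\<in>B. c y \<in> K" "x = (\<Sum>y\<in>B. c y * y)"
      using B(2) unfolding spans_def by blast
    have "\<forall>k<?n. c (h k) \<in> K" using c(1) h by (auto simp: bij_betw_def)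
    moreover have "x = (\<Sum>k<?n. c (h k) * h k)" using c(2) reidx[of "\<lambda>y. c y * y"] by simp
    ultimately show "\<exists>c. (\<forall>k<?n. c k \<in> K) \<and> x = (\<Sum>k<?n. c k * h k)"
      by (intro exI[of _ "\<lambda>k. c (h k)"]) simp
  next
    fix c' :: "nat \<Rightarrow> 'a"
    assume c': "\<forall>k<?n. c' k \<in> K" "(\<Sum>k<?n. c' k * h k) = 0"
    define c where "c y = c' (inv_into {..<?n} h y)" for y
    have inj: "inj_on h {..<?n}" using h by (auto simp: bij_betw_def)
    have ch: "c (h k) = c' k" if "k < ?n" for k
      using inv_into_f_f[OF inj] that by (simp add: c_def)
    have cK: "\<forall>y\<in>B. c y \<in> K"
    proof
      fix y assume "y \<in> B"
      then have "inv_into {..<?n} h y \<in> {..<?n}"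
        using h by (metis bij_betw_def inv_into_into)
      then show "c y \<in> K" using c'(1) by (simp add: c_def)
    qed
    have "(\<Sum>y\<in>B. c y * y) = (\<Sum>k<?n. c (h k) * h k)" using reidx[of "\<lambda>y. c y * y"] by simp
    also have "\<dots> = (\<Sum>k<?n. c' k * h k)" by (intro sum.cong refl) (simp add: ch)
    finally have "(\<Sum>y\<in>B. c y * y) = 0" using c'(2) by simp
    then have "\<forall>y\<in>B. c y = 0" using indepB cK by blast
    moreover have "h k \<in> B" if "k < ?n" for k using h that by (auto simp: bij_betw_def)
    ultimately show "\<forall>k<?n. c' k = 0" using ch by metis
  qed
  then show ?thesis by blast
qed

theorem proposition7p1:
  fixes K :: "'a::field set"
  assumes "is_subfield K"
    and "finite_ext K"
    and "\<not> alg_closed_field TYPE('a)"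
    and "has_model_of_Z (UNIV :: 'a set)"
  shows "has_model_of_Z K"
proof -
  obtain n b where kb: "kbasis K n b" using basis_exists[OF assms(1,2)] by blast
  interpret kbasis K n b by (rule kb)
  obtain d and f :: "int \<Rightarrow> 'a list" and D where
    M: "D \<subseteq> tuples UNIV d" "bij_betw f UNIV D" "definable UNIV d D"
       "definable UNIV (3 * d) {f a @ f b @ f (a + b) | a b. True}"
       "definable UNIV (3 * d) {f a @ f b @ f (a * b) | a b. True}"
    using assms(4) unfolding has_model_of_Z_def by blast
  let ?f = "enc \<circ> f"
  have sub: "enc ` D \<subseteq> tuples K (n * d)"
  proof
    fix ys assume "ys \<in> enc ` D"
    then obtain xs where "xs \<in> D" "ys = enc xs" by blast
    then show "ys \<in> tuples K (n * d)" using M(1) enc_tuples[of xs] by (auto simp: tuples_def)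
  qed
  have bij: "bij_betw ?f UNIV (enc ` D)"
    using bij_betw_trans[OF M(2) inj_on_imp_bij_betw[OF inj_on_subset[OF inj_enc subset_UNIV]]] .
  have add: "{?f a @ ?f b @ ?f (a + b) | a b. True} = enc ` {f a @ f b @ f (a + b) | a b. True}"
    unfolding image_def by (auto simp: enc_append[symmetric])
  have mul: "{?f a @ ?f b @ ?f (a * b) | a b. True} = enc ` {f a @ f b @ f (a * b) | a b. True}"
    unfolding image_def by (auto simp: enc_append[symmetric])
  have "definable K (3 * (n * d)) {?f a @ ?f b @ ?f (a + b) | a b. True}"
    using definable_enc[OF M(4)] unfolding add by (simp add: mult_ac)
  moreover have "definable K (3 * (n * d)) {?f a @ ?f b @ ?f (a * b) | a b. True}"
    using definable_enc[OF M(5)] unfolding mul by (simp add: mult_ac)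
  ultimately show ?thesis
    unfolding has_model_of_Z_def using sub bij definable_enc[OF M(3)] by blast
qed

end
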